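(* Let $(\mathcal G_0,\mathcal G_1)$ be a sub-decomposition and let $G_0=([d],E_0)\in\mathcal G_0$ have maximum degree bounded by a constant $D$ (independent of $d$). Suppose there exist constants $0<c,\gamma\le1$ such that for each vertex $v\in[d]$ there is a set of vertices $W_v$ with $|W_v|\ge c\,d^{\gamma}$ and $([d],E_0\cup\{\{v,w\}\})\in\mathcal G_1$ for all $w\in W_v$. Then there exists a single-edge divider $\mathcal C$ with null base $G_0$ satisfying $M(\mathcal C,d_{G_0},\log|\mathcal C|)\asymp\log d$.
   Context: A sub-decomposition $(\mathcal G_0,\mathcal G_1)$ is a pair of disjoint families of graphs on vertex set $[d]$. For a graph $G$ on $[d]$, $d_G(u,v)$ is the length of a shortest path between vertices $u,v$ in $G$ ($\infty$ if none); for edges $e,e'$ (not necessarily in $G$), $d_G(e,e')=\min_{u\in e,v\in e'}d_G(u,v)$. Given $G_0=([d],E_0)\in\mathcal G_0$, an edge set $\mathcal C$ is a single-edge divider with null base $G_0$ if $([d],E_0\cup\{e\})\in\mathcal G_1$ for every $e\in\mathcal C$. An $r$-packing of $\mathcal C$ (w.r.t. $G$) is a subset $N\subseteq\mathcal C$ with $d_G(e,e')\ge r$ for all distinct $e,e'\in N$, and $M(\mathcal C,d_G,r)=\log\max\{|N|: N\text{ an }r\text{-packing of }\mathcal C\}$. $a_d\asymp b_d$ means $c'<a_d/b_d<C''$ for positive constants $c',C''$. *)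

theory Defs
  imports "HOL-Analysis.Analysis"
begin

text \<open>Graphs on the vertex set [d] = {1..d} are represented by their edge sets;
an edge is a 2-element set of vertices.\<close>

definition is_graph :: "nat \<Rightarrow> nat set set \<Rightarrow> bool" where
  "is_graph d E \<longleftrightarrow> (\<forall>e\<in>E. \<exists>u v. e = {u, v} \<and> u \<noteq> v \<and> u \<in> {1..d} \<and> v \<in> {1..d})"

definition sub_decomposition :: "nat \<Rightarrow> nat set set set \<Rightarrow> nat set set set \<Rightarrow> bool" where
  "sub_decomposition d G0s G1s \<longleftrightarrow>
     (\<forall>G\<in>G0s. is_graph d G) \<and> (\<forall>G\<in>G1s. is_graph d G) \<and> G0s \<inter> G1s = {}"

text \<open>Shortest-path distance (infinity if no path).\<close>
definition gdist :: "nat set set \<Rightarrow> nat \<Rightarrow> nat \<Rightarrow> enat" where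
  "gdist E u v = (INF n \<in> {n. ((\<lambda>x y. {x, y} \<in> E) ^^ n) u v}. enat n)"

definition edist :: "nat set set \<Rightarrow> nat set \<Rightarrow> nat set \<Rightarrow> enat" where
  "edist E e e' = (INF p \<in> e \<times> e'. gdist E (fst p) (snd p))"

definition max_degree_le :: "nat set set \<Rightarrow> nat \<Rightarrow> bool" where
  "max_degree_le E D \<longleftrightarrow> (\<forall>v. card {w. {v, w} \<in> E} \<le> D)"

text \<open>Single-edge divider with null base E0 (E0 is assumed to be in the null family).\<close>
definition single_edge_divider :: "nat set set set \<Rightarrow> nat set set \<Rightarrow> nat set set \<Rightarrow> bool" where
  "single_edge_divider G1s E0 C \<longleftrightarrow> (\<forall>e\<in>C. E0 \<union> {e} \<in> G1s)"

definition is_packing :: "nat set set \<Rightarrow> nat set set \<Rightarrow> real \<Rightarrow> nat set set \<Rightarrow> bool" where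
  "is_packing E C r N \<longleftrightarrow> N \<subseteq> C \<and>
     (\<forall>e\<in>N. \<forall>e'\<in>N. e \<noteq> e' \<longrightarrow> ereal r \<le> ereal_of_enat (edist E e e'))"

definition packing_entropy :: "nat set set \<Rightarrow> nat set set \<Rightarrow> real \<Rightarrow> real" where
  "packing_entropy E C r = ln (real (Max {card N | N. is_packing E C r N}))"

end

theory Submission imports Defs "HOL-Real_Asymp.Real_Asymp" begin


lemma graph_nbr:
  assumes "is_graph d E" "{y,z} \<in> E" shows "z \<in> {1..d} \<and> y \<in> {1..d}"
  using assms unfolding is_graph_def by (fastforce simp: doubleton_eq_iff)

lemma relpowp_sym_adj:
  "((\<lambda>x y. {x,y} \<in> E) ^^ n) x y \<Longrightarrow> ((\<lambda>x y. {x,y} \<in> E) ^^ n) y x"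
proof (induction n arbitrary: x y)
  case 0 then show ?case by (auto elim: relpowp_0_E)
next
  case (Suc n)
  from Suc.prems obtain m where "((\<lambda>x y. {x,y} \<in> E) ^^ n) x m" "{m,y} \<in> E"
    by (auto elim: relpowp_Suc_E)
  then have "((\<lambda>x y. {x,y} \<in> E) ^^ n) m x" "{y,m} \<in> E" using Suc.IH by (auto simp: insert_commute)
  then show ?case by (rule relpowp_Suc_I2[rotated])
qed

lemma layer:
  assumes g: "is_graph d E" and dg: "max_degree_le E D"
  shows "finite {y. ((\<lambda>x y. {x,y} \<in> E) ^^ n) x y} \<and> card {y. ((\<lambda>x y. {x,y} \<in> E) ^^ n) x y} \<le> D ^ n"
proof (induction n)
  case 0 then show ?case by simp
next
  case (Suc n)
  define N where "N = {y. ((\<lambda>x y. {x,y} \<in> E) ^^ n) x y}"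
  have eq: "{y. ((\<lambda>x y. {x,y} \<in> E) ^^ Suc n) x y} = (\<Union>m\<in>N. {z. {m,z} \<in> E})"
    unfolding N_def by (auto intro: relpowp_Suc_I elim: relpowp_Suc_E)
  have fn: "finite N" "card N \<le> D ^ n" using Suc.IH unfolding N_def by auto
  have fz: "finite {z. {m,z} \<in> E}" for m
    by (rule finite_subset[of _ "{1..d}"]) (use graph_nbr[OF g] in auto)
  have "card (\<Union>m\<in>N. {z. {m,z} \<in> E}) \<le> (\<Sum>m\<in>N. card {z. {m,z} \<in> E})"
    by (rule card_UN_le[OF fn(1)])
  also have "\<dots> \<le> (\<Sum>m\<in>N. D)" by (rule sum_mono) (use dg in \<open>auto simp: max_degree_le_def\<close>)
  also have "\<dots> = card N * D" by simp
  also have "\<dots> \<le> D ^ n * D" using fn(2) by simp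
  finally have c1: "card {y. ((\<lambda>x y. {x,y} \<in> E) ^^ Suc n) x y} \<le> D ^ Suc n"
    unfolding eq by (simp add: mult.commute)
  have f1: "finite {y. ((\<lambda>x y. {x,y} \<in> E) ^^ Suc n) x y}"
    unfolding eq using fn(1) fz by blast
  from f1 c1 show ?case by blast
qed

lemma ball:
  assumes g: "is_graph d E" and dg: "max_degree_le E D"
  shows "finite {y. \<exists>n<R. ((\<lambda>x y. {x,y} \<in> E) ^^ n) x y} \<and>
         card {y. \<exists>n<R. ((\<lambda>x y. {x,y} \<in> E) ^^ n) x y} \<le> R * (D+1) ^ R"
proof -
  have eq: "{y. \<exists>n<R. ((\<lambda>x y. {x,y} \<in> E) ^^ n) x y} = (\<Union>n\<in>{..<R}. {y. ((\<lambda>x y. {x,y} \<in> E) ^^ n) x y})"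
    by auto
  have "card (\<Union>n\<in>{..<R}. {y. ((\<lambda>x y. {x,y} \<in> E) ^^ n) x y}) \<le> (\<Sum>n<R. card {y. ((\<lambda>x y. {x,y} \<in> E) ^^ n) x y})"
    by (rule card_UN_le) simp
  also have "\<dots> \<le> (\<Sum>n<R. (D+1)^R)"
  proof (rule sum_mono)
    fix n assume "n \<in> {..<R}"
    have "card {y. ((\<lambda>x y. {x,y} \<in> E) ^^ n) x y} \<le> D ^ n" using layer[OF g dg] by blast
    also have "\<dots> \<le> (D+1) ^ n" by (rule power_mono) auto
    also have "\<dots> \<le> (D+1) ^ R" using \<open>n \<in> {..<R}\<close> by (intro power_increasing) auto
    finally show "card {y. ((\<lambda>x y. {x,y} \<in> E) ^^ n) x y} \<le> (D+1) ^ R" .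
  qed
  also have "\<dots> = R * (D+1)^R" by simp
  finally show ?thesis unfolding eq using layer[OF g dg] by auto
qed

lemma greedy:
  assumes g: "is_graph d E" and dg: "max_degree_le E D" and R1: "1 \<le> R"
    and Wsub: "\<forall>v\<in>{1..d}. W v \<subseteq> {1..d}"
  shows "(\<forall>v\<in>{1..d}. 2*k*(R*(D+1)^R) < card (W v)) \<Longrightarrow> 2*k*(R*(D+1)^R) < d \<Longrightarrow>
    \<exists>C. card C = k \<and> finite C \<and> (\<forall>e\<in>C. \<exists>v\<in>{1..d}. \<exists>w\<in>W v. e = {v,w}) \<and>
      (\<forall>e\<in>C. \<forall>e'\<in>C. e \<noteq> e' \<longrightarrow> (\<forall>x\<in>e. \<forall>y\<in>e'. \<forall>n<R. \<not> ((\<lambda>x y. {x,y} \<in> E) ^^ n) x y))"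
proof (induction k)
  case 0 then show ?case by (intro exI[of _ "{}"]) auto
next
  case (Suc k)
  define B where "B = R*(D+1)^R"
  have le: "2*k*B \<le> 2*Suc k*B" by simp
  have p1: "\<forall>v\<in>{1..d}. 2*k*B < card (W v)"
  proof
    fix v assume "v \<in> {1..d}"
    then have "2*Suc k*B < card (W v)" using Suc.prems(1) unfolding B_def by blast
    then show "2*k*B < card (W v)" using le by linarith
  qed
  have p2: "2*k*B < d" using Suc.prems(2) le unfolding B_def by linarith
  have IH: "\<exists>C. card C = k \<and> finite C \<and> (\<forall>e\<in>C. \<exists>v\<in>{1..d}. \<exists>w\<in>W v. e = {v,w}) \<and> (\<forall>e\<in>C. \<forall>e'\<in>C. e \<noteq> e' \<longrightarrow> (\<forall>x\<in>e. \<forall>y\<in>e'. \<forall>n<R. \<not> ((\<lambda>x y. {x,y} \<in> E) ^^ n) x y))"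
    by (rule Suc.IH) (use p1 p2 in \<open>simp_all add: B_def\<close>)
  from IH show ?case
  proof (elim exE conjE)
  fix C assume C: "card C = k" "finite C" "\<forall>e\<in>C. \<exists>v\<in>{1..d}. \<exists>w\<in>W v. e = {v,w}"
       "\<forall>e\<in>C. \<forall>e'\<in>C. e \<noteq> e' \<longrightarrow> (\<forall>x\<in>e. \<forall>y\<in>e'. \<forall>n<R. \<not> ((\<lambda>x y. {x,y} \<in> E) ^^ n) x y)"
  define S where "S = (\<Union>e\<in>C. e)"
  have ce: "finite e \<and> card e \<le> 2" if "e \<in> C" for e
  proof -
    from C(3) that obtain v w where "e = {v,w}" by blast
    then show ?thesis by (cases "v = w") auto
  qed
  have fS: "finite S" unfolding S_def using C(2) ce by auto
  have "card S \<le> (\<Sum>e\<in>C. card e)" unfolding S_def by (rule card_UN_le[OF C(2)])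
  also have "\<dots> \<le> (\<Sum>e\<in>C. 2)" by (rule sum_mono) (use ce in auto)
  finally have cS: "card S \<le> 2*k" using C(1) by simp
  define F where "F = (\<Union>x\<in>S. {y. \<exists>n<R. ((\<lambda>x y. {x,y} \<in> E) ^^ n) x y})"
  have fF: "finite F" unfolding F_def using fS ball[OF g dg] by auto
  have "card F \<le> (\<Sum>x\<in>S. card {y. \<exists>n<R. ((\<lambda>x y. {x,y} \<in> E) ^^ n) x y})"
    unfolding F_def by (rule card_UN_le[OF fS])
  also have "\<dots> \<le> (\<Sum>x\<in>S. B)" unfolding B_def
    by (rule sum_mono) (use ball[OF g dg] in blast)
  also have "\<dots> = card S * B" by simp
  also have "\<dots> \<le> 2*k*B" using cS by (rule mult_right_mono) simp
  finally have cF: "card F \<le> 2*k*B" .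
  have SF: "S \<subseteq> F"
  proof
    fix x assume xS: "x \<in> S"
    have "((\<lambda>x y. {x,y} \<in> E) ^^ 0) x x" by (rule relpowp_0_I)
    then have "x \<in> {y. \<exists>n<R. ((\<lambda>x y. {x,y} \<in> E) ^^ n) x y}" using R1 by (intro CollectI exI[of _ 0] conjI) simp_all
    then show "x \<in> F" unfolding F_def using xS by blast
  qed
  have "\<not> {1..d} \<subseteq> F"
  proof
    assume "{1..d} \<subseteq> F" then have "card {1..d} \<le> card F" by (rule card_mono[OF fF])
    moreover have "card {1..d} = d" by simp
    ultimately show False using cF p2 by linarith
  qed
  then obtain v where v: "v \<in> {1..d}" "v \<notin> F" by blast
  have "\<not> W v \<subseteq> F"
  proof
    assume "W v \<subseteq> F" then have "card (W v) \<le> card F" by (rule card_mono[OF fF])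
    moreover have "2*k*B < card (W v)" using p1 v(1) by blast
    ultimately show False using cF by linarith
  qed
  then obtain w where w: "w \<in> W v" "w \<notin> F" by blast
  have notin: "{v,w} \<notin> C"
  proof
    assume "{v,w} \<in> C" then have "v \<in> S" unfolding S_def by blast
    with SF v show False by blast
  qed
  have far1: "\<not> ((\<lambda>x y. {x,y} \<in> E) ^^ n) x y" if "x \<in> S" "y \<in> {v,w}" "n < R" for x y n
    using that v w unfolding F_def by blast
  have far2: "\<not> ((\<lambda>x y. {x,y} \<in> E) ^^ n) y x" if "x \<in> S" "y \<in> {v,w}" "n < R" for x y n
    using far1[OF that] relpowp_sym_adj[where E=E and n=n and x=y and y=x] by blast
  show ?case
  proof (intro exI[of _ "insert {v,w} C"] conjI)
    show "card (insert {v,w} C) = Suc k" using C(1,2) notin by simp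
    show "finite (insert {v,w} C)" using C(2) by simp
    show "\<forall>e\<in>insert {v,w} C. \<exists>v\<in>{1..d}. \<exists>w\<in>W v. e = {v,w}" using C(3) v w by auto
    show "\<forall>e\<in>insert {v,w} C. \<forall>e'\<in>insert {v,w} C. e \<noteq> e' \<longrightarrow>
      (\<forall>x\<in>e. \<forall>y\<in>e'. \<forall>n<R. \<not> ((\<lambda>x y. {x,y} \<in> E) ^^ n) x y)"
    proof (intro ballI impI allI)
      fix e e' x y n
      assume e: "e \<in> insert {v,w} C" and e': "e' \<in> insert {v,w} C" and ne: "e \<noteq> e'"
        and x: "x \<in> e" and y: "y \<in> e'" and n: "n < R"
      show "\<not> ((\<lambda>x y. {x,y} \<in> E) ^^ n) x y"
      proof (cases "e = {v,w}")
        case True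
        then have "e' \<in> C" using e' ne by auto
        then have "y \<in> S" using y unfolding S_def by blast
        then show ?thesis using far2[of y x n] x n True by blast
      next
        case False
        then have eC: "e \<in> C" using e by auto
        then have xS: "x \<in> S" using x unfolding S_def by blast
        show ?thesis
        proof (cases "e' = {v,w}")
          case True
          then show ?thesis using far1[OF xS _ n] y by blast
        next
          case False
          then have "e' \<in> C" using e' by auto
          then show ?thesis using C(4) eC ne x y n by blast
        qed
      qed
    qed
  qed
qed
qed

lemma far_edist:
  assumes "\<forall>x\<in>e. \<forall>y\<in>e'. \<forall>n<R. \<not> ((\<lambda>x y. {x,y} \<in> E) ^^ n) x y"
  shows "enat R \<le> edist E e e'"
  unfolding edist_def gdist_def
  using assms by (force intro!: INF_greatest simp: not_less[symmetric])

lemma packing_eq: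
  assumes fC: "finite C" and far: "\<forall>e\<in>C. \<forall>e'\<in>C. e \<noteq> e' \<longrightarrow> enat R \<le> edist E e e'"
    and r: "r \<le> real R"
  shows "packing_entropy E C r = ln (real (card C))"
proof -
  have pk: "is_packing E C r C" unfolding is_packing_def
  proof (intro conjI ballI impI subset_refl)
    fix e e' assume "e \<in> C" "e' \<in> C" "e \<noteq> e'"
    then have "enat R \<le> edist E e e'" using far by blast
    then have "ereal (real R) \<le> ereal_of_enat (edist E e e')"
      by (metis ereal_of_enat_le_iff ereal_of_enat_simps(1))
    then show "ereal r \<le> ereal_of_enat (edist E e e')" using r by (meson ereal_less_eq(3) order_trans)
  qed
  have "Max {card N | N. is_packing E C r N} = card C"
  proof (rule Max_eqI)
    show "finite {card N | N. is_packing E C r N}"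
      by (rule finite_subset[of _ "card ` Pow C"]) (use fC in \<open>auto simp: is_packing_def\<close>)
    show "y \<le> card C" if "y \<in> {card N | N. is_packing E C r N}" for y
      using that fC by (auto simp: is_packing_def intro: card_mono)
    show "card C \<in> {card N | N. is_packing E C r N}" using pk by blast
  qed
  then show ?thesis unfolding packing_entropy_def by simp
qed



lemma bound_k:
  fixes x e :: real assumes "0 \<le> y"
  shows "real (nat \<lfloor>y\<rfloor>) \<le> y" "y - 1 < real (nat \<lfloor>y\<rfloor>)"
  using assms by (simp_all add: of_nat_nat)

lemma bound_R:
  fixes y :: real assumes "0 \<le> y"
  shows "real (nat \<lceil>y\<rceil>) \<le> y + 1" "y \<le> real (nat \<lceil>y\<rceil>)"
  using assms by (simp_all add: of_nat_nat)

lemma pow_bound: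
  fixes x :: real and D R :: nat and e :: real
  assumes x: "1 < x" and e: "0 \<le> e" and R: "real R \<le> e * ln x + 1"
  shows "(real D + 1) ^ R \<le> (real D + 1) * x powr (e * ln (real D + 1))"
proof -
  have "(real D + 1) ^ R = (real D + 1) powr (real R)" by (simp add: powr_realpow)
  also have "\<dots> \<le> (real D + 1) powr (e * ln x + 1)" by (rule powr_mono[OF R]) simp
  also have "\<dots> = (real D + 1) powr (e * ln x) * (real D + 1)" by (simp add: powr_add)
  also have "(real D + 1) powr (e * ln x) = x powr (e * ln (real D + 1))"
    using x by (simp add: powr_def mult_ac)
  finally show ?thesis by (simp add: mult_ac)
qed

lemma ratio_bounds:
  fixes x e :: real
  assumes x: "1 < x" and e0: "0 < e" and e1: "e < 1" and A2: "ln 2 < e * ln x / 2" and A3: "2 \<le> x powr e"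
  defines "k \<equiv> nat \<lfloor>x powr e\<rfloor>"
  shows "1 \<le> k" "ln (real k) \<le> e * ln x" "e/2 < ln (real k) / ln x" "ln (real k) / ln x < 1"
proof -
  have lx: "0 < ln x" using x by simp
  have k1: "real k \<le> x powr e" "x powr e - 1 < real k" unfolding k_def using bound_k[of "x powr e"] by auto
  then have k2: "x powr e / 2 \<le> real k" using A3 by linarith
  show "1 \<le> k" using k1 A3 by linarith
  have kp: "0 < real k" using k2 A3 by linarith
  have xp: "0 < x powr e" using x by simp
  have "ln (real k) \<le> ln (x powr e)" using ln_le_cancel_iff[OF kp xp] k1(1) by blast
  also have "\<dots> = e * ln x" by simp
  finally show up: "ln (real k) \<le> e * ln x" .
  have "ln (x powr e / 2) \<le> ln (real k)" using k2 kp A3 by (subst ln_le_cancel_iff) auto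
  moreover have "ln (x powr e / 2) = e * ln x - ln 2" using x by (simp add: ln_div)
  ultimately have lo: "e * ln x - ln 2 \<le> ln (real k)" by simp
  show "e/2 < ln (real k) / ln x" using lo A2 lx by (simp add: pos_less_divide_eq)
  have "e * ln x < ln x" using e1 lx by simp
  then have "ln (real k) < ln x" using up by linarith
  then show "ln (real k) / ln x < 1" using lx by (simp add: pos_divide_less_eq)
qed

lemma step:
  fixes d D :: nat and c \<gamma> e :: real and E :: "nat set set" and G1 :: "nat set set set"
  assumes g: "is_graph d E" and dg: "max_degree_le E D" and G1g: "\<forall>G\<in>G1. is_graph d G"
    and c0: "0 < c" and c1: "c \<le> 1" and \<gamma>0: "0 < \<gamma>" and \<gamma>1: "\<gamma> \<le> 1" and e0: "0 < e"
    and eL: "e * (1 + ln (real D + 1)) = \<gamma> / 4"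
    and A1: "2 * (real D + 1) * real d powr (\<gamma>/4) * (e * ln (real d) + 1) < c * real d powr \<gamma>"
    and A4: "1 < real d"
    and W: "\<forall>v\<in>{1..d}. \<exists>W :: nat set. real (card W) \<ge> c * real d powr \<gamma> \<and> (\<forall>w\<in>W. E \<union> {{v, w}} \<in> G1)"
  shows "\<exists>C. single_edge_divider G1 E C \<and> finite C \<and> card C = nat \<lfloor>real d powr e\<rfloor> \<and>
     (\<forall>e1\<in>C. \<forall>e2\<in>C. e1 \<noteq> e2 \<longrightarrow> enat (nat \<lceil>e * ln (real d)\<rceil>) \<le> edist E e1 e2)"
proof -
  define x where "x = real d"
  define k where "k = nat \<lfloor>x powr e\<rfloor>"
  define R where "R = nat \<lceil>e * ln x\<rceil>"
  define L where "L = ln (real D + 1)"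
  have x1: "1 < x" using A4 unfolding x_def .
  have lx: "0 < ln x" using x1 by simp
  have el: "0 < e * ln x" using lx e0 by simp
  obtain Wf where Wf: "\<forall>v\<in>{1..d}. real (card (Wf v)) \<ge> c * x powr \<gamma> \<and> (\<forall>w\<in>Wf v. E \<union> {{v, w}} \<in> G1)"
    using bchoice[OF W] unfolding x_def by blast
  have Wsub: "\<forall>v\<in>{1..d}. Wf v \<subseteq> {1..d}"
  proof (intro ballI subsetI)
    fix v w assume v: "v \<in> {1..d}" and w: "w \<in> Wf v"
    then have "E \<union> {{v, w}} \<in> G1" using Wf by blast
    then have "is_graph d (E \<union> {{v, w}})" using G1g by blast
    then show "w \<in> {1..d}" using graph_nbr[of d "E \<union> {{v, w}}" v w] by blast
  qed
  have R1: "1 \<le> R" unfolding R_def using el by linarith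
  have hk: "real k \<le> x powr e" unfolding k_def using bound_k[of "x powr e"] by simp
  have hR: "real R \<le> e * ln x + 1" unfolding R_def using bound_R[of "e * ln x"] el by simp
  have hP: "(real D + 1) ^ R \<le> (real D + 1) * x powr (e * L)"
    unfolding L_def by (rule pow_bound[OF x1 _ hR]) (use e0 in simp)
  have "real (2*k*(R*(D+1)^R)) = 2 * real k * (real R * (real D + 1) ^ R)" by (simp add: add.commute)
  also have "\<dots> \<le> 2 * x powr e * ((e * ln x + 1) * ((real D + 1) * x powr (e * L)))"
    by (intro mult_mono hk hR hP mult_left_mono) (use el in auto)
  also have "\<dots> = 2 * (real D + 1) * (x powr e * x powr (e * L)) * (e * ln x + 1)" by (simp add: mult_ac)
  also have "x powr e * x powr (e * L) = x powr (\<gamma>/4)"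
  proof -
    have h: "e + e * L = \<gamma>/4" using eL unfolding L_def by (simp add: ring_distribs)
    have "x powr e * x powr (e * L) = x powr (e + e * L)" by (rule powr_add[symmetric])
    also have "\<dots> = x powr (\<gamma>/4)" using h by (simp only:)
    finally show ?thesis .
  qed
  also have "2 * (real D + 1) * x powr (\<gamma>/4) * (e * ln x + 1) < c * x powr \<gamma>" using A1 unfolding x_def .
  finally have B: "real (2*k*(R*(D+1)^R)) < c * x powr \<gamma>" .
  have "x powr \<gamma> \<le> x powr 1" by (rule powr_mono) (use \<gamma>1 x1 in auto)
  then have "x powr \<gamma> \<le> x" using x1 by simp
  moreover have "c * x powr \<gamma> \<le> x powr \<gamma>" using c0 c1 by (intro mult_left_le_one_le) simp_all
  ultimately have Bx: "c * x powr \<gamma> \<le> real d" unfolding x_def by linarith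
  have p1: "\<forall>v\<in>{1..d}. 2*k*(R*(D+1)^R) < card (Wf v)"
  proof
    fix v assume "v \<in> {1..d}"
    then have "c * x powr \<gamma> \<le> real (card (Wf v))" using Wf by blast
    with B have "real (2*k*(R*(D+1)^R)) < real (card (Wf v))" by linarith
    then show "2*k*(R*(D+1)^R) < card (Wf v)" by (simp only: of_nat_less_iff)
  qed
  have "real (2*k*(R*(D+1)^R)) < real d" using B Bx by linarith
  then have p2: "2*k*(R*(D+1)^R) < d" by (simp only: of_nat_less_iff)
  obtain C where C: "card C = k" "finite C" "\<forall>e\<in>C. \<exists>v\<in>{1..d}. \<exists>w\<in>Wf v. e = {v,w}"
       "\<forall>e\<in>C. \<forall>e'\<in>C. e \<noteq> e' \<longrightarrow> (\<forall>x\<in>e. \<forall>y\<in>e'. \<forall>n<R. \<not> ((\<lambda>x y. {x,y} \<in> E) ^^ n) x y)"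
    using greedy[OF g dg R1 Wsub p1 p2] by (elim exE conjE) 
  show ?thesis
  proof (intro exI[of _ C] conjI)
    show "single_edge_divider G1 E C" unfolding single_edge_divider_def
    proof
      fix e' assume "e' \<in> C"
      then obtain v w where "v \<in> {1..d}" "w \<in> Wf v" "e' = {v,w}" using C(3) by blast
      then show "E \<union> {e'} \<in> G1" using Wf by blast
    qed
    show "finite C" by (rule C(2))
    show "card C = nat \<lfloor>real d powr e\<rfloor>" using C(1) unfolding k_def x_def .
    show "\<forall>e1\<in>C. \<forall>e2\<in>C. e1 \<noteq> e2 \<longrightarrow> enat (nat \<lceil>e * ln (real d)\<rceil>) \<le> edist E e1 e2"
    proof (intro ballI impI)
      fix e1 e2 assume "e1 \<in> C" "e2 \<in> C" "e1 \<noteq> e2"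
      then have "\<forall>x\<in>e1. \<forall>y\<in>e2. \<forall>n<R. \<not> ((\<lambda>x y. {x,y} \<in> E) ^^ n) x y" using C(4) by blast
      then have "enat R \<le> edist E e1 e2" by (rule far_edist)
      then show "enat (nat \<lceil>e * ln (real d)\<rceil>) \<le> edist E e1 e2" unfolding R_def x_def .
    qed
  qed
qed

theorem proposition2p1:
  fixes G0s G1s :: "nat \<Rightarrow> nat set set set"
    and G0 :: "nat \<Rightarrow> nat set set"
    and D :: nat and c \<gamma> :: real
  assumes subdec: "\<And>d. sub_decomposition d (G0s d) (G1s d)"
    and base: "\<And>d. G0 d \<in> G0s d"
    and deg: "\<And>d. max_degree_le (G0 d) D"
    and c: "0 < c" "c \<le> 1"
    and \<gamma>: "0 < \<gamma>" "\<gamma> \<le> 1"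
    and W: "\<forall>\<^sub>F d in sequentially. \<forall>v\<in>{1..d}. \<exists>W :: nat set.
              real (card W) \<ge> c * real d powr \<gamma> \<and>
              (\<forall>w\<in>W. G0 d \<union> {{v, w}} \<in> G1s d)"
  shows "\<exists>C :: nat \<Rightarrow> nat set set.
           (\<forall>d. single_edge_divider (G1s d) (G0 d) (C d)) \<and>
           (\<exists>c' C''. 0 < c' \<and> 0 < C'' \<and>
              (\<forall>\<^sub>F d in sequentially.
                 c' < packing_entropy (G0 d) (C d) (ln (real (card (C d)))) / ln (real d) \<and>
                 packing_entropy (G0 d) (C d) (ln (real (card (C d)))) / ln (real d) < C''))"
proof -
  define L where "L = ln (real D + 1)"
  have L0: "0 \<le> L" unfolding L_def by simp
  define e where "e = \<gamma> / (4 * (1 + L))"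
  have e0: "0 < e" unfolding e_def using \<gamma> L0 by simp
  have eL': "e * (1 + L) = \<gamma> / 4" unfolding e_def using L0 by (simp add: field_simps)
  then have eL: "e * (1 + ln (real D + 1)) = \<gamma> / 4" unfolding L_def .
  have e1: "e < 1"
  proof -
    have "e * 1 \<le> e * (1 + L)" using e0 L0 by (intro mult_left_mono) auto
    then show ?thesis using eL \<gamma> unfolding L_def by simp
  qed
  define Q where "Q d C \<longleftrightarrow> single_edge_divider (G1s d) (G0 d) C \<and> finite C \<and>
     card C = nat \<lfloor>real d powr e\<rfloor> \<and>
     (\<forall>e1\<in>C. \<forall>e2\<in>C. e1 \<noteq> e2 \<longrightarrow> enat (nat \<lceil>e * ln (real d)\<rceil>) \<le> edist (G0 d) e1 e2)" for d C
  define CC where "CC d = (if \<exists>C. Q d C then SOME C. Q d C else {})" for d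
  have CCQ: "Q d (CC d)" if "\<exists>C. Q d C" for d
    unfolding CC_def using that someI_ex[OF that] by simp
  have div: "\<forall>d. single_edge_divider (G1s d) (G0 d) (CC d)"
  proof
    fix d show "single_edge_divider (G1s d) (G0 d) (CC d)"
    proof (cases "\<exists>C. Q d C")
      case True then show ?thesis using CCQ[OF True] unfolding Q_def by blast
    next
      case False then have "CC d = {}" unfolding CC_def by (rule if_not_P)
      then show ?thesis unfolding single_edge_divider_def by simp
    qed
  qed
  have a1: "\<forall>\<^sub>F x in at_top. 2 * (real D + 1) * x powr (\<gamma>/4) * (e * ln x + 1) < c * x powr \<gamma>"
    using c(1) \<gamma>(1) e0 by real_asymp
  have a2: "\<forall>\<^sub>F x in at_top. ln 2 < e * ln x / 2" using e0 by real_asymp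
  have a3: "\<forall>\<^sub>F x in at_top. 2 \<le> x powr e" using e0 by real_asymp
  have a4: "\<forall>\<^sub>F x::real in at_top. 1 < x" by real_asymp
  have "\<forall>\<^sub>F x in at_top. (2 * (real D + 1) * x powr (\<gamma>/4) * (e * ln x + 1) < c * x powr \<gamma>) \<and>
      ln 2 < e * ln x / 2 \<and> 2 \<le> x powr e \<and> 1 < x"
    using a1 a2 a3 a4 by eventually_elim blast
  then have ev: "\<forall>\<^sub>F d in sequentially. (2 * (real D + 1) * real d powr (\<gamma>/4) * (e * ln (real d) + 1) < c * real d powr \<gamma>) \<and>
      ln 2 < e * ln (real d) / 2 \<and> 2 \<le> real d powr e \<and> 1 < real d"
    using filterlim_real_sequentially unfolding filterlim_iff by blast
  show ?thesis
  proof (rule exI[of _ CC], rule conjI[OF div], rule exI[of _ "e/2"], rule exI[of _ "1::real"], intro conjI)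
    show "0 < e/2" using e0 by simp
    show "(0::real) < 1" by simp
    show "\<forall>\<^sub>F d in sequentially.
         e/2 < packing_entropy (G0 d) (CC d) (ln (real (card (CC d)))) / ln (real d) \<and>
         packing_entropy (G0 d) (CC d) (ln (real (card (CC d)))) / ln (real d) < 1"
      using ev W
    proof eventually_elim
      case (elim d)
      then have A1: "2 * (real D + 1) * real d powr (\<gamma>/4) * (e * ln (real d) + 1) < c * real d powr \<gamma>"
        and A2: "ln 2 < e * ln (real d) / 2" and A3: "2 \<le> real d powr e" and A4: "1 < real d"
        and Wd: "\<forall>v\<in>{1..d}. \<exists>W :: nat set. real (card W) \<ge> c * real d powr \<gamma> \<and> (\<forall>w\<in>W. G0 d \<union> {{v, w}} \<in> G1s d)"
        by blast+
      have g: "is_graph d (G0 d)" using subdec[of d] base[of d] unfolding sub_decomposition_def by blast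
      have G1g: "\<forall>G\<in>G1s d. is_graph d G" using subdec[of d] unfolding sub_decomposition_def by blast
      have ex: "\<exists>C. Q d C" unfolding Q_def
        by (rule step[OF g deg G1g c(1) c(2) \<gamma>(1) \<gamma>(2) e0 eL A1 A4 Wd])
      have Qd: "Q d (CC d)" by (rule CCQ[OF ex])
      define k where "k = nat \<lfloor>real d powr e\<rfloor>"
      note rb = ratio_bounds[OF A4 e0 e1 A2 A3, folded k_def]
      have ck: "card (CC d) = k" using Qd unfolding Q_def k_def by blast
      have "ln (real (card (CC d))) \<le> real (nat \<lceil>e * ln (real d)\<rceil>)"
      proof -
        have "0 \<le> e * ln (real d)" using A4 e0 by simp
        then have "e * ln (real d) \<le> real (nat \<lceil>e * ln (real d)\<rceil>)" by (rule bound_R(2))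
        then show ?thesis using rb(2) ck by simp
      qed
      then have pe: "packing_entropy (G0 d) (CC d) (ln (real (card (CC d)))) = ln (real k)"
        using packing_eq[of "CC d" "nat \<lceil>e * ln (real d)\<rceil>" "G0 d"] Qd ck unfolding Q_def by auto
      show ?case unfolding pe using rb(3,4) by simp
    qed
  qed
qed

end
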